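(* Let $n$ be an even positive integer, and let $a,b$ be distinct integers with $0<a,b<n$, $a$ even and $b$ odd, so that $G=C_{2n}(a,b,n)$ is a $5$-regular circulant graph. Then $G$ admits a factorization (in the sense described in the context) as a Cartesian product of a $3$-regular circulant graph and a $2$-regular circulant graph if and only if there exist positive integers $p,q$ with $p>2$, $1<q<n$, $p\mid a$, $q\mid b$, $pq=2n$ and $\gcd(p,q)=1$.
   Context: For an integer $m$ and a set $R$ of positive integers each at most $m/2$, the circulant graph $C_m(R)$ has vertex set $\{0,1,\dots,m-1\}$, with $i$ and $j$ adjacent iff $\min(|i-j|,\,m-|i-j|)\in R$; it is regular of degree $2|R|$ if $m/2\notin R$ and of degree $2|R|-1$ if $m/2\in R$. $C_{2n}(a,b,n)$ denotes the circulant graph on $2n$ vertices with jump set $\{a,b,n\}$. The Cartesian product $G_1\square G_2$ has vertex set $V(G_1)\times V(G_2)$, with $(u_1,v_1)\sim(u_2,v_2)$ iff either $u_1=u_2$ and $v_1v_2\in E(G_2)$, or $v_1=v_2$ and $u_1u_2\in E(G_1)$. The factorization theorem for circulant graphs states: if $p,q$ are relatively prime, $R\subseteq[1,p/2]$, $S\subseteq[1,q/2]$ and $T=qR\cup pS$ (where $qR=\{qr:r\in R\}$, $pS=\{ps:s\in S\}$), then $C_{pq}(T)\cong C_p(R)\square C_q(S)$. "$G=C_{2n}(a,b,n)$ admits a factorization as a Cartesian product of a $3$-regular and a $2$-regular circulant graph" means: there exist relatively prime integers $p,q>1$ with $pq=2n$ and sets of integers $R\subseteq[1,p/2]$, $S\subseteq[1,q/2]$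 with $qR\cup pS=\{a,b,n\}$, such that $C_p(R)$ is $3$-regular and $C_q(S)$ is $2$-regular (so that $G\cong C_p(R)\square C_q(S)$ by the factorization theorem). *)

theory Defs
  imports Main
begin

definition circ_adj :: "nat \<Rightarrow> nat set \<Rightarrow> nat \<Rightarrow> nat \<Rightarrow> bool" where
  "circ_adj m R i j \<longleftrightarrow> i < m \<and> j < m \<and>
     (let d = (if j \<le> i then i - j else j - i) in min d (m - d) \<in> R)"

definition circ_regular :: "nat \<Rightarrow> nat set \<Rightarrow> nat \<Rightarrow> bool" where
  "circ_regular m R k \<longleftrightarrow> (\<forall>i<m. card {j. j < m \<and> circ_adj m R i j} = k)"

definition admits_3_2_factorization :: "nat \<Rightarrow> nat \<Rightarrow> nat \<Rightarrow> bool" where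
  "admits_3_2_factorization n a b \<longleftrightarrow>
     (\<exists>p q R S. p > 1 \<and> q > 1 \<and> coprime p q \<and> p * q = 2 * n \<and>
        (\<forall>r\<in>R. 1 \<le> r \<and> 2 * r \<le> p) \<and> (\<forall>s\<in>S. 1 \<le> s \<and> 2 * s \<le> q) \<and>
        ((\<lambda>r. q * r) ` R \<union> (\<lambda>s. p * s) ` S = {a, b, n}) \<and>
        circ_regular p R 3 \<and> circ_regular q S 2)"

end

theory Submission
  imports Defs
begin

lemma mod_lt2: "(x::nat) < 2*m \<Longrightarrow> x mod m = (if x < m then x else x - m)"
proof (cases "x < m")
  case True then show ?thesis by simp
next
  case False
  assume "x < 2*m"
  then have "x - m < m" using False by linarith
  then have "(x - m) mod m = x - m" by simp
  moreover have "x mod m = (x - m) mod m" using False by (simp add: le_mod_geq)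
  ultimately show ?thesis using False by simp
qed

lemma adj0: "circ_adj m R 0 j \<longleftrightarrow> j < m \<and> min j (m - j) \<in> R"
  by (auto simp: circ_adj_def Let_def)

lemma adj_shift:
  assumes "i < m" "j < m"
  shows "circ_adj m R i ((j + i) mod m) = circ_adj m R 0 j"
proof (cases "j + i < m")
  case True
  then have e: "(j + i) mod m = j + i" by simp
  have "(if j + i \<le> i then i - (j + i) else j + i - i) = j" by auto
  then show ?thesis using True e assms by (simp add: circ_adj_def Let_def)
next
  case False
  then have e: "(j + i) mod m = j + i - m" using mod_lt2[of "j+i" m] assms by simp
  have d: "(if j + i - m \<le> i then i - (j + i - m) else j + i - m - i) = m - j"
    using False assms by auto
  have "min (m - j) (m - (m - j)) = min j (m - j)" using assms by auto
  moreover have "j + i - m < m" using assms by linarith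
  ultimately show ?thesis using False e d assms by (simp add: circ_adj_def Let_def)
qed

lemma nbr_image:
  assumes "i < m"
  shows "{k. k < m \<and> circ_adj m R i k} = (\<lambda>j. (j + i) mod m) ` {j. j < m \<and> circ_adj m R 0 j}"
proof
  show "{k. k < m \<and> circ_adj m R i k} \<subseteq> (\<lambda>j. (j + i) mod m) ` {j. j < m \<and> circ_adj m R 0 j}"
  proof
    fix k assume k: "k \<in> {k. k < m \<and> circ_adj m R i k}"
    define j where "j = (k + m - i) mod m"
    have jm: "j < m" using assms j_def by simp
    have "(j + i) mod m = (k + m - i + i) mod m" unfolding j_def by (simp add: mod_add_left_eq)
    also have "\<dots> = k" using k assms by simp
    finally have kj: "(j + i) mod m = k" .
    then have "circ_adj m R 0 j" using adj_shift[OF assms jm, of R] k by simp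
    then show "k \<in> (\<lambda>j. (j + i) mod m) ` {j. j < m \<and> circ_adj m R 0 j}"
      using kj jm by (metis (mono_tags, lifting) image_eqI mem_Collect_eq)
  qed
next
  show "(\<lambda>j. (j + i) mod m) ` {j. j < m \<and> circ_adj m R 0 j} \<subseteq> {k. k < m \<and> circ_adj m R i k}"
    using adj_shift[OF assms] assms by auto
qed

lemma inj_shift:
  fixes i m :: nat
  assumes "i < m"
  shows "inj_on (\<lambda>j. (j + i) mod m) {j. j < m \<and> P j}"
proof (rule inj_onI)
  fix x y assume x: "x \<in> {j. j < m \<and> P j}" and y: "y \<in> {j. j < m \<and> P j}"
    and e: "(x + i) mod m = (y + i) mod m"
  have "(x + i) mod m = (if x + i < m then x + i else x + i - m)" using mod_lt2 x assms by simp
  moreover have "(y + i) mod m = (if y + i < m then y + i else y + i - m)" using mod_lt2 y assms by simp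
  ultimately show "x = y" using e x y assms by (auto split: if_splits)
qed

lemma circ_regular_iff:
  assumes "0 < m"
  shows "circ_regular m R k \<longleftrightarrow> card {j. j < m \<and> circ_adj m R 0 j} = k"
proof -
  have H: "card {j. j < m \<and> circ_adj m R i j} = card {j. j < m \<and> circ_adj m R 0 j}" if i: "i < m" for i
  proof -
    show "card {j. j < m \<and> circ_adj m R i j} = card {j. j < m \<and> circ_adj m R 0 j}"
      unfolding nbr_image[OF i] by (rule card_image[OF inj_shift[OF i]])
  qed
  show ?thesis unfolding circ_regular_def
  proof
    assume "\<forall>i<m. card {j. j < m \<and> circ_adj m R i j} = k"
    then show "card {j. j < m \<and> circ_adj m R 0 j} = k" using assms by blast
  next
    assume "card {j. j < m \<and> circ_adj m R 0 j} = k"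
    then show "\<forall>i<m. card {j. j < m \<and> circ_adj m R i j} = k" using H by metis
  qed
qed

lemma N0:
  fixes R :: "nat set" and m :: nat
  assumes "\<forall>r\<in>R. 1 \<le> r \<and> 2 * r \<le> m"
  shows "{j. j < m \<and> circ_adj m R 0 j} = R \<union> (\<lambda>r. m - r) ` R"
proof
  show "{j. j < m \<and> circ_adj m R 0 j} \<subseteq> R \<union> (\<lambda>r. m - r) ` R"
  proof
    fix j assume "j \<in> {j. j < m \<and> circ_adj m R 0 j}"
    then have j: "j < m" "min j (m - j) \<in> R" by (auto simp: adj0)
    show "j \<in> R \<union> (\<lambda>r. m - r) ` R"
    proof (cases "j \<le> m - j")
      case True then show ?thesis using j by (simp add: min_def)
    next
      case False
      then have "m - j \<in> R" using j by (simp add: min_def)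
      moreover have "j = m - (m - j)" using j by simp
      ultimately show ?thesis by blast
    qed
  qed
next
  show "R \<union> (\<lambda>r. m - r) ` R \<subseteq> {j. j < m \<and> circ_adj m R 0 j}"
  proof
    fix x assume "x \<in> R \<union> (\<lambda>r. m - r) ` R"
    then show "x \<in> {j. j < m \<and> circ_adj m R 0 j}"
    proof
      assume x: "x \<in> R"
      then have "1 \<le> x" "2 * x \<le> m" using assms by auto
      then have "x < m" "min x (m - x) = x" by auto
      then show ?thesis using x by (simp add: adj0)
    next
      assume "x \<in> (\<lambda>r. m - r) ` R"
      then obtain r where r: "r \<in> R" "x = m - r" by auto
      then have "1 \<le> r" "2 * r \<le> m" using assms by auto
      then have "min x (m - x) = r" "x < m" using r by (auto simp: min_def)
      then show ?thesis using r by (simp add: adj0)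
    qed
  qed
qed

lemma card_formula:
  fixes R :: "nat set" and m :: nat
  assumes "\<forall>r\<in>R. 1 \<le> r \<and> 2 * r \<le> m"
  shows "card (R \<union> (\<lambda>r. m - r) ` R) + card {r\<in>R. 2 * r = m} = 2 * card R"
    and "card {r\<in>R. 2 * r = m} \<le> 1" and "finite R"
proof -
  show fin: "finite R" using assms by (intro finite_subset[of R "{..m}"]) auto
  have inj: "inj_on (\<lambda>r. m - r) R"
  proof (rule inj_onI)
    fix x y assume "x \<in> R" "y \<in> R" "m - x = m - y"
    moreover have "2 * x \<le> m" "2 * y \<le> m" using assms calculation by auto
    ultimately show "x = y" by simp
  qed
  have int: "R \<inter> (\<lambda>r. m - r) ` R = {r\<in>R. 2 * r = m}"
  proof
    show "R \<inter> (\<lambda>r. m - r) ` R \<subseteq> {r \<in> R. 2 * r = m}"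
    proof
      fix x assume "x \<in> R \<inter> (\<lambda>r. m - r) ` R"
      then obtain r where "x \<in> R" "r \<in> R" "x = m - r" by auto
      moreover have "2 * x \<le> m" "2 * r \<le> m" using assms calculation by auto
      ultimately show "x \<in> {r \<in> R. 2 * r = m}" by simp
    qed
  next
    show "{r \<in> R. 2 * r = m} \<subseteq> R \<inter> (\<lambda>r. m - r) ` R"
    proof
      fix x assume x: "x \<in> {r \<in> R. 2 * r = m}"
      then have "x = m - x" by auto
      then show "x \<in> R \<inter> (\<lambda>r. m - r) ` R" using x by blast
    qed
  qed
  have "card R + card ((\<lambda>r. m - r) ` R) = card (R \<union> (\<lambda>r. m - r) ` R) + card (R \<inter> (\<lambda>r. m - r) ` R)"
    using fin by (intro card_Un_Int) auto
  then show "card (R \<union> (\<lambda>r. m - r) ` R) + card {r\<in>R. 2 * r = m} = 2 * card R"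
    using int card_image[OF inj] by simp
  have "{r\<in>R. 2 * r = m} \<subseteq> {m div 2}" by auto
  then show "card {r\<in>R. 2 * r = m} \<le> 1" using card_mono[of "{m div 2}"] by simp
qed

theorem theorem31:
  fixes n a b :: nat
  assumes "n > 0" and "even n"
    and "a \<noteq> b" and "0 < a" and "a < n" and "0 < b" and "b < n"
    and "even a" and "odd b"
  shows "admits_3_2_factorization n a b \<longleftrightarrow>
         (\<exists>p q :: nat. p > 2 \<and> 1 < q \<and> q < n \<and> p dvd a \<and> q dvd b \<and>
            p * q = 2 * n \<and> gcd p q = 1)"
proof
  assume "admits_3_2_factorization n a b"
  then obtain p q R S where pq: "p > 1" "q > 1" "coprime p q" "p * q = 2 * n"
    and Rb: "\<forall>r\<in>R. 1 \<le> r \<and> 2 * r \<le> p" and Sb: "\<forall>s\<in>S. 1 \<le> s \<and> 2 * s \<le> q"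
    and img: "(\<lambda>r. q * r) ` R \<union> (\<lambda>s. p * s) ` S = {a, b, n}"
    and rR: "circ_regular p R 3" and rS: "circ_regular q S 2"
    unfolding admits_3_2_factorization_def by blast
  note cR = card_formula[OF Rb] and cS = card_formula[OF Sb]
  have c3: "card (R \<union> (\<lambda>r. p - r) ` R) = 3"
    using rR circ_regular_iff[of p R 3] N0[OF Rb] pq by simp
  have c2: "card (S \<union> (\<lambda>r. q - r) ` S) = 2"
    using rS circ_regular_iff[of q S 2] N0[OF Sb] pq by simp
  have eR: "card {r\<in>R. 2 * r = p} = 1" and cardR: "card R = 2" using cR(1,2) c3 by presburger+
  have eS: "card {r\<in>S. 2 * r = q} = 0" and cardS: "card S = 1" using cS(1,2) c2 by presburger+
  obtain x where xs: "{r\<in>R. 2 * r = p} = {x}" using eR card_1_singletonE by blast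
  then have x: "x \<in> R" "2 * x = p" by auto
  obtain u v where uv: "R = {u, v}" "u \<noteq> v" using cardR by (meson card_2_iff)
  obtain y where y: "R = {y, x}" "y \<noteq> x"
  proof (cases "x = u")
    case True then show ?thesis using that[of v] uv by auto
  next
    case False then have "x = v" using x uv by auto
    then show ?thesis using that[of u] uv by auto
  qed
  have "y \<in> R" using y by auto
  then have "1 \<le> y" "2 * y \<le> p" using Rb by auto
  then have y2: "1 \<le> y" "2 * y < p" using y x by auto
  obtain s where s: "S = {s}" using cardS card_1_singletonE by blast
  have "1 \<le> s" "2 * s \<le> q" using Sb s by auto
  moreover have "2 * s \<noteq> q" using eS cS(3) s by auto
  ultimately have s2: "1 \<le> s" "2 * s < q" by auto
  have "2 * (q * x) = 2 * n" using pq(4) x(2) by (simp add: ac_simps)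
  then have nx: "q * x = n" by simp
  have "q * (2 * y) < q * p" using y2 pq by (intro mult_strict_left_mono) auto
  then have "2 * (q * y) < 2 * n" using pq(4) by (simp add: ac_simps)
  then have qy: "q * y < n" by simp
  have "p * (2 * s) < p * q" using s2 pq by (intro mult_strict_left_mono) auto
  then have "2 * (p * s) < 2 * n" using pq(4) by (simp add: ac_simps)
  then have ps: "p * s < n" by simp
  have img2: "{q * y, n, p * s} = {a, b, n}" using img y s nx by auto
  have "even (p * s)" using x by auto
  then have "b \<noteq> p * s" using assms(9) by auto
  moreover have "b \<in> {q * y, n, p * s}" using img2 by auto
  ultimately have b: "b = q * y" using assms(7) by auto
  have "a \<in> {q * y, n, p * s}" using img2 by auto
  then have a: "a = p * s" using b assms(3,5) by auto
  have "p > 2" using x y2 by linarith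
  moreover have "q < n"
  proof -
    have "x \<ge> 2" using x y2 by linarith
    then have "q * 2 \<le> q * x" by simp
    then show ?thesis using nx pq by linarith
  qed
  moreover have "gcd p q = 1" using pq(3) by simp
  moreover have "p dvd a" using a by simp
  moreover have "q dvd b" using b by simp
  ultimately show "\<exists>p q :: nat. p > 2 \<and> 1 < q \<and> q < n \<and> p dvd a \<and> q dvd b \<and>
            p * q = 2 * n \<and> gcd p q = 1"
    using pq(2,4) by (intro exI[of _ p] exI[of _ q] conjI) simp_all
next
  assume "\<exists>p q :: nat. p > 2 \<and> 1 < q \<and> q < n \<and> p dvd a \<and> q dvd b \<and>
            p * q = 2 * n \<and> gcd p q = 1"
  then obtain p q where pq: "p > 2" "1 < q" "q < n" "p dvd a" "q dvd b" "p * q = 2 * n" "gcd p q = 1"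
    by (elim exE conjE) simp
  have oq: "odd q" using pq(5) assms(9) dvd_trans[of 2 q b] by blast
  have "even (p * q)" using pq(6) by simp
  then have ep: "even p" using oq by simp
  then obtain x where x: "p = 2 * x" by (rule evenE)
  have nx: "n = q * x" using pq(6) x by (simp add: mult.commute)
  obtain r where r: "b = q * r" using pq(5) by (rule dvdE)
  obtain s where s: "a = p * s" using pq(4) by (rule dvdE)
  have r1: "1 \<le> r" using r assms by (cases r) auto
  have s1: "1 \<le> s" using s assms by (cases s) auto
  have "q * r < q * x" using r nx assms(7) by simp
  then have rx: "r < x" by simp
  have "x * (2 * s) < x * q" using s nx x assms(5) by (simp add: ac_simps)
  then have sq: "2 * s < q" by simp
  define R where "R = {r, x}"
  define S where "S = {s}"
  have Rb: "\<forall>t\<in>R. 1 \<le> t \<and> 2 * t \<le> p" using R_def r1 rx x by auto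
  have Sb: "\<forall>t\<in>S. 1 \<le> t \<and> 2 * t \<le> q" using S_def s1 sq by auto
  have "card R = 2" using R_def rx by auto
  moreover have "{t\<in>R. 2 * t = p} = {x}" using R_def rx x by auto
  ultimately have "card (R \<union> (\<lambda>r. p - r) ` R) = 3" using card_formula(1)[OF Rb] by simp
  then have regR: "circ_regular p R 3" using circ_regular_iff[of p R 3] N0[OF Rb] pq by simp
  have "card S = 1" using S_def by auto
  moreover have "{t\<in>S. 2 * t = q} = {}" using S_def sq by auto
  then have "card {t\<in>S. 2 * t = q} = 0" by (simp only: card.empty)
  ultimately have "card (S \<union> (\<lambda>r. q - r) ` S) = 2" using card_formula(1)[OF Sb] by linarith
  then have regS: "circ_regular q S 2" using circ_regular_iff[of q S 2] N0[OF Sb] pq by simp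
  have img: "(\<lambda>t. q * t) ` R \<union> (\<lambda>t. p * t) ` S = {a, b, n}" using R_def S_def r s nx by auto
  have cp: "coprime p q" using pq(7) by (simp add: coprime_iff_gcd_eq_1)
  show "admits_3_2_factorization n a b" unfolding admits_3_2_factorization_def
    apply (rule exI[of _ p], rule exI[of _ q], rule exI[of _ R], rule exI[of _ S])
    using pq Rb Sb img regR regS cp by simp
qed

end
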